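(* In the setting described in the context, for every $(u_1,\dots,u_n)\in C(U,W,\alpha)$ and every $i\in[n-1]$, we have $[i+1,n]\subseteq\mathrm{fix}_{(\alpha_i,n]}(u_i,u_{i+1})$.
   Context: Permutations: for integers $a\le n$, $S_{[a,n]}$ is the set of bijections of $\mathbb Z$ fixing every integer outside $[a,n]$, one-line notation $[w(a),\dots,w(n)]$; $\tau_{i,j}$ swaps $i<j$, $u\tau_{i,j}=u\circ\tau_{i,j}$; $\ell(u)$ = number of inversions; $u\lessdot_k u\tau_{i,j}$ if $i\le k<j$ and $\ell(u\tau_{i,j})=\ell(u)+1$; $u\xrightarrow{k}w$ if there is a chain $u=v_1\lessdot_k\cdots\lessdot_k v_s=w$ ($s\ge1$), $v_{t+1}=v_t\tau_{i_t,j_t}$, with $v_1(i_1)<\cdots<v_{s-1}(i_{s-1})$. $\mathrm{fix}_I(u,v)=\{u(t):t\in I,\ u(t)=v(t)\}$. For $\beta=(\beta_1,\dots,\beta_m)$, $C(u,w,\beta)$ is the set of $(v_1,\dots,v_{m+1})$ with $v_1=u$, $v_{m+1}=w$, $v_i\xrightarrow{\beta_i}v_{i+1}$. Setting: fix $a\le 0<n$ and let $A=\{(r,c):1\le r\le n,\ a\le c\le r\}$. Let $\gamma=(\gamma_N,\gamma_E,\gamma_S,\gamma_W)$ be a boundary condition of $A$: $\gamma_N(c)$ (for columns $c\in[a,n]$) is the label of the pipe entering through the top edge of the top cell $(\max(c,1),c)$ of column $c$ or $\varnothing$; $\gamma_E(r)$ the label of the pipe entering through the right edge of $(r,r)$ or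 $\varnothing$; $\gamma_S(c)$ the label of the pipe exiting through the bottom edge of $(n,c)$ or $\varnothing$; $\gamma_W(r)$ that of the pipe exiting through the left edge of $(r,a)$ or $\varnothing$. Assume $\gamma_S(c)\ne\varnothing$ for all $c\in[a,n]$, $\gamma_W(r)=\varnothing$ and $\gamma_N(r)\neq\varnothing$ for $r\in[n]$, and the non-$\varnothing$ values of $\gamma_N,\gamma_E$ are exactly $a,\dots,n$, increasing along the order: top edges of columns $a,\dots,1$, right edge of row 1, top edge of column 2, right edge of row 2, …, top edge of column $n$, right edge of row $n$. (The values of $\gamma_S$ are then also exactly $a,\dots,n$.) Put $p_c=\gamma_N(c)$ ($c\in[n]$), $\alpha_i=p_{i+1}-1$, $\alpha=(\alpha_1,\dots,\alpha_{n-1})$. $P_r=\{w\in S_{[a,n]}:w(p_j)=j\ \forall j\in(r,n]\}$; $\iota_r:P_r\to S_{[a,r]}$ deletes the values $r+1,\dots,n$ from one-line notation. $W\in P_1$: $\iota_1(W)(\ell)=\gamma_N^{-1}(\ell)$ for $\ell\in[a,p_1]$ and $\iota_1(W)$ decreasing on $(p_1,1]$. $U\in S_{[a,n]}$: $U(\ell)=\gamma_S^{-1}(\ell)$ for $\ell\in[a,n]$. (Here $\gamma_N^{-1}(\ell)$, $\gamma_S^{-1}(\ell)$ denote the column with that value.) *)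

theory Defs
  imports Main "HOL-Combinatorics.Transposition"
begin

definition perm_on_interval :: "int \<Rightarrow> int \<Rightarrow> (int \<Rightarrow> int) \<Rightarrow> bool" where
  "perm_on_interval a n w \<longleftrightarrow> bij w \<and> (\<forall>x. x < a \<or> n < x \<longrightarrow> w x = x)"

definition inv_len :: "(int \<Rightarrow> int) \<Rightarrow> nat" where
  "inv_len u = card {(i, j). i < j \<and> u j < u i}"

definition tmul :: "(int \<Rightarrow> int) \<Rightarrow> int \<Rightarrow> int \<Rightarrow> (int \<Rightarrow> int)" where
  "tmul u i j = u \<circ> transpose i j"

definition kcover :: "int \<Rightarrow> (int \<Rightarrow> int) \<Rightarrow> int \<Rightarrow> int \<Rightarrow> bool" where
  "kcover k u i j \<longleftrightarrow> i \<le> k \<and> k < j \<and> inv_len (tmul u i j) = inv_len u + 1"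

text \<open>u --k--> w: chain v_1 = u, ..., v_s = w (s >= 1), v_{t+1} = v_t tau_{i_t,j_t} covers,
  with v_1(i_1) < ... < v_{s-1}(i_{s-1}).  The list vs is (v_1,...,v_s), ps the list of pairs (i_t,j_t).\<close>
definition kchain :: "int \<Rightarrow> (int \<Rightarrow> int) \<Rightarrow> (int \<Rightarrow> int) \<Rightarrow> bool" where
  "kchain k u w \<longleftrightarrow> (\<exists>vs ps. vs \<noteq> [] \<and> hd vs = u \<and> last vs = w \<and>
      length ps = length vs - 1 \<and>
      (\<forall>t < length ps. kcover k (vs ! t) (fst (ps ! t)) (snd (ps ! t)) \<and>
                       vs ! Suc t = tmul (vs ! t) (fst (ps ! t)) (snd (ps ! t))) \<and>
      sorted_wrt (<) (map (\<lambda>t. (vs ! t) (fst (ps ! t))) [0..<length ps]))"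

definition fixI :: "int set \<Rightarrow> (int \<Rightarrow> int) \<Rightarrow> (int \<Rightarrow> int) \<Rightarrow> int set" where
  "fixI I u v = {u t | t. t \<in> I \<and> u t = v t}"

text \<open>C(u,w,beta): tuples (v_1,...,v_{m+1}) represented as lists of length m+1.\<close>
definition Cset :: "(int \<Rightarrow> int) \<Rightarrow> (int \<Rightarrow> int) \<Rightarrow> int list \<Rightarrow> (int \<Rightarrow> int) list set" where
  "Cset u w \<beta> = {vs. length vs = length \<beta> + 1 \<and> vs ! 0 = u \<and> vs ! length \<beta> = w \<and>
      (\<forall>i < length \<beta>. kchain (\<beta> ! i) (vs ! i) (vs ! Suc i))}"

text \<open>Sequence of boundary edges of A in the order: top edges of columns a,...,1, right edge of
  row 1, top edge of column 2, right edge of row 2, ..., top edge of column n, right edge of row n.\<close>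
definition NE_sequence :: "int \<Rightarrow> int \<Rightarrow> (int \<Rightarrow> int option) \<Rightarrow> (int \<Rightarrow> int option) \<Rightarrow> int option list" where
  "NE_sequence a n gN gE = map gN [a..1] @ [gE 1] @ concat (map (\<lambda>r. [gN r, gE r]) [2..n])"

text \<open>Standing assumptions on the boundary condition gamma = (gN, gE, gS, gW); None encodes the empty label.
  The last conjunct records that the values of gS are exactly a,...,n.\<close>
definition good_boundary :: "int \<Rightarrow> int \<Rightarrow> (int \<Rightarrow> int option) \<Rightarrow> (int \<Rightarrow> int option) \<Rightarrow>
    (int \<Rightarrow> int option) \<Rightarrow> (int \<Rightarrow> int option) \<Rightarrow> bool" where
  "good_boundary a n gN gE gS gW \<longleftrightarrow>
     (\<forall>c \<in> {a..n}. gS c \<noteq> None) \<and>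
     (\<forall>r \<in> {1..n}. gW r = None \<and> gN r \<noteq> None) \<and>
     map the (filter (\<lambda>x. x \<noteq> None) (NE_sequence a n gN gE)) = [a..n] \<and>
     bij_betw (\<lambda>c. the (gS c)) {a..n} {a..n}"

definition col_of :: "int \<Rightarrow> int \<Rightarrow> (int \<Rightarrow> int option) \<Rightarrow> int \<Rightarrow> int" where
  "col_of a n g l = (THE c. c \<in> {a..n} \<and> g c = Some l)"

definition pcol :: "(int \<Rightarrow> int option) \<Rightarrow> int \<Rightarrow> int" where
  "pcol gN c = the (gN c)"

definition alpha_seq :: "int \<Rightarrow> (int \<Rightarrow> int option) \<Rightarrow> int list" where
  "alpha_seq n gN = map (\<lambda>i. pcol gN (i + 1) - 1) [1..n - 1]"

definition Pset :: "int \<Rightarrow> int \<Rightarrow> (int \<Rightarrow> int option) \<Rightarrow> int \<Rightarrow> (int \<Rightarrow> int) set" where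
  "Pset a n gN r = {w. perm_on_interval a n w \<and> (\<forall>j \<in> {r<..n}. w (pcol gN j) = j)}"

text \<open>iota_r: delete the values r+1,...,n from the one-line notation [w(a),...,w(n)] and read
  the result as the one-line notation of a permutation in S_[a,r].\<close>
definition iota :: "int \<Rightarrow> int \<Rightarrow> int \<Rightarrow> (int \<Rightarrow> int) \<Rightarrow> (int \<Rightarrow> int)" where
  "iota a n r w = (\<lambda>l. if a \<le> l \<and> l \<le> r
      then filter (\<lambda>v. v \<le> r) (map w [a..n]) ! nat (l - a) else l)"

end

theory Submission
  imports Defs
begin
definition fp :: "(int \<Rightarrow> int) \<Rightarrow> bool" where
  "fp u \<longleftrightarrow> (\<exists>c d. perm_on_interval c d u)"

lemma poi_maps:
  assumes "perm_on_interval c d u" "c \<le> x" "x \<le> d"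
  shows "c \<le> u x \<and> u x \<le> d"
proof (rule ccontr)
  assume "\<not> (c \<le> u x \<and> u x \<le> d)"
  then have "u (u x) = u x" using assms(1) unfolding perm_on_interval_def by auto
  moreover have "inj u" using assms(1) unfolding perm_on_interval_def bij_def by auto
  ultimately have "u x = x" by (meson injD)
  then show False using \<open>\<not> (c \<le> u x \<and> u x \<le> d)\<close> assms by auto
qed

lemma fp_finite_inv:
  assumes "fp u" shows "finite {(i, j). i < j \<and> u j < u i}"
proof -
  obtain c d where P: "perm_on_interval c d u" using assms fp_def by auto
  have fx: "\<And>x. x < c \<or> d < x \<Longrightarrow> u x = x" using P perm_on_interval_def by auto
  have "{(i, j). i < j \<and> u j < u i} \<subseteq> {c..d} \<times> {c..d}"
  proof clarify
    fix x y :: int assume xy: "x < y" "u y < u x"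
    have "c \<le> x"
    proof (rule ccontr)
      assume "\<not> c \<le> x"
      then have ux: "u x = x" using fx by auto
      show False
      proof (cases "c \<le> y \<and> y \<le> d")
        case True then show ?thesis using poi_maps[OF P] ux xy \<open>\<not> c \<le> x\<close> by fastforce
      next
        case False then have "u y = y" using fx by auto
        then show ?thesis using ux xy by auto
      qed
    qed
    moreover have "y \<le> d"
    proof (rule ccontr)
      assume "\<not> y \<le> d"
      then have uy: "u y = y" using fx by auto
      show False
      proof (cases "c \<le> x \<and> x \<le> d")
        case True then show ?thesis using poi_maps[OF P] uy xy \<open>\<not> y \<le> d\<close> by fastforce
      next
        case False then have "u x = x" using fx by auto
        then show ?thesis using uy xy by auto
      qed
    qed
    ultimately show "x \<in> {c..d} \<and> y \<in> {c..d}" using xy by auto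
  qed
  then show ?thesis by (rule finite_subset) auto
qed

lemma fp_tmul:
  assumes "fp u" shows "fp (tmul u i j)"
proof -
  obtain c d where P: "perm_on_interval c d u" using assms fp_def by auto
  have "perm_on_interval (min c (min i j)) (max d (max i j)) (tmul u i j)"
    using P unfolding perm_on_interval_def tmul_def
    by (auto intro: bij_comp simp: transpose_def)
  then show ?thesis unfolding fp_def by blast
qed

lemma inv_increase:
  assumes "fp u" "i < j" "u i < u j"
  shows "inv_len u < inv_len (tmul u i j)"
proof -
  define s where "s = Transposition.transpose i j"
  define I where "I = {(x, y). x < y \<and> u y < u x}"
  define J where "J = {(x, y). x < y \<and> (u \<circ> s) y < (u \<circ> s) x}"
  have fJ: "finite J" unfolding J_def using fp_finite_inv[OF fp_tmul[OF assms(1)]]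
    by (simp add: tmul_def s_def)
  define g where "g = (\<lambda>(x::int, y::int). if (x = i \<and> i < y \<and> y < j) \<or> (y = j \<and> i < x \<and> x < j)
     then (x, y) else (s x, s y))"
  have inj: "inj_on g I"
  proof (rule inj_onI)
    fix p q assume "p \<in> I" "q \<in> I" "g p = g q"
    then show "p = q" unfolding g_def I_def s_def transpose_def using assms
      by (auto split: if_splits prod.splits)
  qed
  have sub: "g ` I \<subseteq> J - {(i, j)}"
  proof
    fix z assume "z \<in> g ` I"
    then obtain x y where xy: "(x, y) \<in> I" "z = g (x, y)" by auto
    then show "z \<in> J - {(i, j)}" unfolding g_def I_def J_def s_def transpose_def using assms
      by (auto split: if_splits)
  qed
  have "card I \<le> card (J - {(i, j)})"
    using card_inj_on_le[OF inj sub] fJ by auto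
  moreover have "(i, j) \<in> J" unfolding J_def s_def using assms by auto
  ultimately have "card I < card J" using fJ
    by (metis card_Diff1_less le_less_trans)
  then show ?thesis unfolding inv_len_def tmul_def I_def J_def s_def by simp
qed

lemma cover_less:
  assumes "fp u" "kcover k u i j"
  shows "i < j" "u i < u j"
proof -
  show ij: "i < j" using assms(2) kcover_def by auto
  have eq: "inv_len (tmul u i j) = inv_len u + 1" using assms(2) kcover_def by auto
  have "inj u" using assms(1) unfolding fp_def perm_on_interval_def bij_def by auto
  then have ne: "u i \<noteq> u j" using ij by (metis injD less_irrefl)
  show "u i < u j"
  proof (rule ccontr)
    assume "\<not> u i < u j"
    then have "u j < u i" using ne by auto
    let ?v = "tmul u i j"
    have "?v i < ?v j" using \<open>u j < u i\<close> by (simp add: tmul_def)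
    from inv_increase[OF fp_tmul[OF assms(1)] ij this]
    have "inv_len ?v < inv_len (tmul ?v i j)" .
    moreover have "tmul ?v i j = u" unfolding tmul_def by (simp add: comp_assoc)
    ultimately show False using eq by simp
  qed
qed

definition stp :: "int \<Rightarrow> (int \<Rightarrow> int) \<Rightarrow> (int \<Rightarrow> int) \<Rightarrow> bool" where
  "stp k x y \<longleftrightarrow> (\<exists>i j. kcover k x i j \<and> y = tmul x i j)"

lemma stp_fp: "stp k x y \<Longrightarrow> fp x \<Longrightarrow> fp y"
  unfolding stp_def using fp_tmul by blast

lemma stp_mono:
  assumes "stp k x y" "fp x"
  shows "(\<forall>t\<le>k. x t \<le> y t) \<and> (\<forall>t>k. y t \<le> x t)"
proof -
  obtain i j where c: "kcover k x i j" and y: "y = tmul x i j" using assms(1) stp_def by auto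
  have "i \<le> k" "k < j" using c kcover_def by auto
  moreover have "x i < x j" using cover_less[OF assms(2) c] by auto
  ultimately show ?thesis unfolding y tmul_def transpose_def by auto
qed

lemma stp_fix:
  assumes "stp k x y" "fp x" "\<forall>t\<le>k. y t < v"
  shows "\<forall>t. v \<le> x t \<longrightarrow> y t = x t"
proof -
  obtain i j where c: "kcover k x i j" and y: "y = tmul x i j" using assms(1) stp_def by auto
  have "i \<le> k" "k < j" using c kcover_def by auto
  moreover have "x i < x j" using cover_less[OF assms(2) c] by auto
  moreover have "y i = x j" unfolding y tmul_def by simp
  ultimately have "x j < v" "x i < v" using assms(3) by force+
  then show ?thesis unfolding y tmul_def transpose_def by auto
qed

lemma star_fp: "(stp k)\<^sup>*\<^sup>* x y \<Longrightarrow> fp x \<Longrightarrow> fp y"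
  by (induction rule: rtranclp_induct) (auto intro: stp_fp)

lemma star_mono:
  assumes "(stp k)\<^sup>*\<^sup>* x y" "fp x"
  shows "(\<forall>t\<le>k. x t \<le> y t) \<and> (\<forall>t>k. y t \<le> x t)"
  using assms
proof (induction rule: rtranclp_induct)
  case base then show ?case by auto
next
  case (step y z)
  have "fp y" using star_fp step by auto
  from stp_mono[OF step(2) this] step show ?case by force
qed

lemma star_fix:
  assumes "(stp k)\<^sup>*\<^sup>* x y" "fp x" "\<forall>t\<le>k. y t < v"
  shows "\<forall>t. v \<le> x t \<longrightarrow> y t = x t"
  using assms
proof (induction rule: converse_rtranclp_induct)
  case base then show ?case by auto
next
  case (step x z)
  have fz: "fp z" using stp_fp step by auto
  have "\<forall>t\<le>k. z t < v" using star_mono[OF step(2) fz] step(5) by force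
  from stp_fix[OF step(1) step(4) this] step(3)[OF fz step(5)] show ?case by auto
qed

lemma kchain_star:
  assumes "kchain k u w" shows "(stp k)\<^sup>*\<^sup>* u w"
proof -
  obtain vs ps where h: "vs \<noteq> []" "hd vs = u" "last vs = w" "length ps = length vs - 1"
    "\<forall>t < length ps. kcover k (vs ! t) (fst (ps ! t)) (snd (ps ! t)) \<and>
                       vs ! Suc t = tmul (vs ! t) (fst (ps ! t)) (snd (ps ! t))"
    using assms kchain_def by blast
  have "\<forall>t. t \<le> length ps \<longrightarrow> (stp k)\<^sup>*\<^sup>* (vs ! 0) (vs ! t)"
  proof (intro allI)
    fix t show "t \<le> length ps \<longrightarrow> (stp k)\<^sup>*\<^sup>* (vs ! 0) (vs ! t)"
    proof (induction t)
      case 0 then show ?case by auto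
    next
      case (Suc t)
      show ?case
      proof
        assume "Suc t \<le> length ps"
        then have "t < length ps" by auto
        then have "stp k (vs ! t) (vs ! Suc t)" using h(5) unfolding stp_def by blast
        then show "(stp k)\<^sup>*\<^sup>* (vs ! 0) (vs ! Suc t)" using Suc \<open>Suc t \<le> length ps\<close>
          by (meson Suc_leD rtranclp.rtrancl_into_rtrancl)
      qed
    qed
  qed
  then have "(stp k)\<^sup>*\<^sup>* (vs ! 0) (vs ! (length vs - 1))" using h(4) by auto
  then show ?thesis using h by (simp add: hd_conv_nth last_conv_nth)
qed

lemma sorted_filter_iff:
  "sorted_wrt Q (filter P xs) \<longleftrightarrow> sorted_wrt (\<lambda>x y. P x \<longrightarrow> P y \<longrightarrow> Q x y) xs"
  by (induction xs) auto

lemma gb_parts: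
  assumes "good_boundary a n gN gE gS gW"
  shows "map the (filter (\<lambda>x. x \<noteq> None) (NE_sequence a n gN gE)) = [a..n]"
    "\<forall>r \<in> {1..n}. gN r \<noteq> None"
  using assms unfolding good_boundary_def by blast+

lemma gb_sorted:
  assumes "good_boundary a n gN gE gS gW"
  shows "sorted_wrt (\<lambda>x y. x \<noteq> None \<longrightarrow> y \<noteq> None \<longrightarrow> the x < the y) (NE_sequence a n gN gE)"
proof -
  have "sorted_wrt (<) (map the (filter (\<lambda>x. x \<noteq> None) (NE_sequence a n gN gE)))"
    using gb_parts(1)[OF assms] by (metis sorted_wrt_upto)
  then show ?thesis by (simp add: sorted_wrt_map sorted_filter_iff)
qed

lemma gb_pcol_le:
  assumes "good_boundary a n gN gE gS gW" "a \<le> 0" "1 \<le> c" "c \<le> n"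
  shows "pcol gN c \<le> n"
proof -
  have nn: "gN c \<noteq> None" using gb_parts(2)[OF assms(1)] assms by auto
  have "gN c \<in> set (NE_sequence a n gN gE)"
  proof (cases "c = 1")
    case True
    have "(1::int) \<in> set [a..1]" using assms by simp
    then show ?thesis unfolding NE_sequence_def True by simp
  next
    case False
    then have "c \<in> set [2..n]" using assms by simp
    then have "gN c \<in> set (concat (map (\<lambda>r. [gN r, gE r]) [2..n]))" by force
    then show ?thesis unfolding NE_sequence_def by simp
  qed
  then have "the (gN c) \<in> set (map the (filter (\<lambda>x. x \<noteq> None) (NE_sequence a n gN gE)))"
    using nn by auto
  then have "the (gN c) \<in> set [a..n]" using gb_parts(1)[OF assms(1)] by metis
  then show ?thesis unfolding pcol_def by auto
qed

lemma sw_app: "sorted_wrt R (xs @ ys) \<Longrightarrow> x \<in> set xs \<Longrightarrow> y \<in> set ys \<Longrightarrow> R x y"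
  by (simp add: sorted_wrt_append)

lemma gb_pcol_less:
  assumes "good_boundary a n gN gE gS gW" "a \<le> 0" "1 \<le> c" "c < c'" "c' \<le> n"
  shows "pcol gN c < pcol gN c'"
proof -
  have nn: "gN c \<noteq> None" "gN c' \<noteq> None" using gb_parts(2)[OF assms(1)] assms by auto
  let ?R = "\<lambda>x y. x \<noteq> None \<longrightarrow> y \<noteq> None \<longrightarrow> the x < the y"
  let ?g = "\<lambda>r. [gN r, gE r]"
  have S: "sorted_wrt ?R ((map gN [a..1] @ [gE 1]) @ concat (map ?g [2..n]))"
    using gb_sorted[OF assms(1)] unfolding NE_sequence_def by simp
  have "c' \<in> set [2..n]" using assms by simp
  then have c'in: "gN c' \<in> set (concat (map ?g [2..n]))" by force
  show ?thesis
  proof (cases "c = 1")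
    case True
    have "(1::int) \<in> set [a..1]" using assms by simp
    then have "gN 1 \<in> set (map gN [a..1] @ [gE 1])" by simp
    from sw_app[OF S this c'in] have "?R (gN 1) (gN c')" .
    then show ?thesis using nn True unfolding pcol_def by auto
  next
    case False
    have "2 \<le> c" "c \<le> n" using assms False by auto
    then have sp: "[2..n] = [2..c] @ [c+1..n]" by (rule upto_split2)
    have "sorted_wrt ?R (concat (map ?g [2..n]))" using S sorted_wrt_append by blast
    then have S2: "sorted_wrt ?R (concat (map ?g [2..c]) @ concat (map ?g [c+1..n]))"
      unfolding sp map_append concat_append .
    have "c \<in> set [2..c]" using assms False by simp
    then have i1: "gN c \<in> set (concat (map ?g [2..c]))" by force
    have "c' \<in> set [c+1..n]" using assms by simp
    then have i2: "gN c' \<in> set (concat (map ?g [c+1..n]))" by force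
    from sw_app[OF S2 i1 i2] have "?R (gN c) (gN c')" .
    then show ?thesis using nn unfolding pcol_def by auto
  qed
qed

lemma fp_bij: "fp u \<Longrightarrow> bij u" unfolding fp_def perm_on_interval_def by auto

theorem lemma4p14:
  fixes a n :: int
    and gN gE gS gW :: "int \<Rightarrow> int option"
    and W U :: "int \<Rightarrow> int"
    and us :: "(int \<Rightarrow> int) list"
  assumes "a \<le> 0" and "0 < n"
    and "good_boundary a n gN gE gS gW"
    and "W \<in> Pset a n gN 1"
    and "\<forall>l \<in> {a..pcol gN 1}. iota a n 1 W l = col_of a n gN l"
    and "\<forall>x y. pcol gN 1 < x \<and> x < y \<and> y \<le> 1 \<longrightarrow> iota a n 1 W y < iota a n 1 W x"
    and "perm_on_interval a n U"
    and "\<forall>l \<in> {a..n}. U l = col_of a n gS l"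
    and "us \<in> Cset U W (alpha_seq n gN)"
  shows "\<forall>i::nat. 1 \<le> i \<and> int i \<le> n - 1 \<longrightarrow>
           {int i + 1..n} \<subseteq> fixI {alpha_seq n gN ! (i - 1)<..n} (us ! (i - 1)) (us ! i)"
proof -
  define N where "N = nat (n - 1)"
  define L where "L = alpha_seq n gN"
  have lenL: "length L = N" unfolding L_def alpha_seq_def N_def by simp
  have Lnth: "L ! m = pcol gN (int m + 2) - 1" if "m < N" for m
  proof -
    have "m < length [1..n-1]" using that N_def by simp
    moreover have "1 + int m \<le> n - 1" using that N_def by simp
    ultimately show ?thesis unfolding L_def alpha_seq_def by (simp add: add.commute)
  qed
  have C: "length us = N + 1" "us ! 0 = U" "us ! N = W"
     "\<forall>m < N. kchain (L ! m) (us ! m) (us ! Suc m)"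
    using assms(9) lenL unfolding Cset_def L_def by auto
  have ST: "(stp (L ! m))\<^sup>*\<^sup>* (us ! m) (us ! Suc m)" if "m < N" for m
    using C(4) that kchain_star by blast
  have FP: "fp (us ! m)" if "m \<le> N" for m
    using that
  proof (induction m)
    case 0 then show ?case using C(2) assms(7) fp_def by auto
  next
    case (Suc m) then show ?case using star_fp[OF ST] by auto
  qed
  have Wp: "perm_on_interval a n W" "\<forall>j\<in>{1<..n}. W (pcol gN j) = j"
    using assms(4) unfolding Pset_def by auto
  have pmono: "pcol gN c \<le> pcol gN c'" if "1 \<le> c" "c \<le> c'" "c' \<le> n" for c c'
    using gb_pcol_less[OF assms(3) assms(1), of c c'] that by (cases "c = c'") auto
  have Wlem: "W t \<le> c - 1" if "2 \<le> c" "c \<le> n" "t \<le> pcol gN c - 1" for c t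
  proof (rule ccontr)
    assume "\<not> W t \<le> c - 1"
    then have ge: "c \<le> W t" by auto
    have injW: "inj W" using Wp(1) unfolding perm_on_interval_def bij_def by auto
    show False
    proof (cases "W t \<le> n")
      case True
      then have "W (pcol gN (W t)) = W t" using Wp(2) ge that by auto
      then have "pcol gN (W t) = t" using injW by (meson injD)
      moreover have "pcol gN c \<le> pcol gN (W t)" using pmono that ge True by auto
      ultimately show False using that by auto
    next
      case False
      have "pcol gN c \<le> n" using gb_pcol_le[OF assms(3) assms(1)] that by auto
      then have tn: "t < n" using that by auto
      show False
      proof (cases "a \<le> t")
        case True
        then show False using poi_maps[OF Wp(1) True] tn False by auto
      next
        case f2: False
        then have "W t = t" using Wp(1) unfolding perm_on_interval_def by auto
        then show False using False f2 assms(1) assms(2) by auto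
      qed
    qed
  qed
  have UP: "(us ! (q+1)) t \<le> (us ! (q+1+d)) t" if "q < N" "t \<le> L ! q" "q + 1 + d \<le> N" for q t d
    using that
  proof (induction d)
    case 0 then show ?case by simp
  next
    case (Suc d)
    define m where "m = q + 1 + d"
    have mN: "m < N" using Suc m_def by auto
    have "int m + 2 \<le> n" using mN N_def by auto
    moreover have "int q + 2 \<le> int m + 2" using m_def by auto
    ultimately have "pcol gN (int q + 2) \<le> pcol gN (int m + 2)" using pmono by auto
    then have "L ! q \<le> L ! m" using Lnth[OF Suc(2)] Lnth[OF mN] by auto
    then have "t \<le> L ! m" using Suc by auto
    then have "(us ! m) t \<le> (us ! Suc m) t" using star_mono[OF ST[OF mN] FP] mN by auto
    then show ?case using Suc m_def by auto
  qed
  have DOWN: "(us ! (m+d)) t \<le> (us ! m) t" if "n < t" "m + d \<le> N" for m t d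
    using that
  proof (induction d)
    case 0 then show ?case by simp
  next
    case (Suc d)
    define r where "r = m + d"
    have rN: "r < N" using Suc r_def by auto
    have "pcol gN (int r + 2) \<le> n" using gb_pcol_le[OF assms(3) assms(1)] rN N_def by auto
    then have "L ! r < t" using Lnth[OF rN] Suc by auto
    then have "(us ! Suc r) t \<le> (us ! r) t" using star_mono[OF ST[OF rN] FP] rN by auto
    then show ?case using Suc r_def by auto
  qed
  show ?thesis
  proof (intro allI impI)
    fix i :: nat assume i: "1 \<le> i \<and> int i \<le> n - 1"
    define q where "q = i - 1"
    have qi: "Suc q = i" using i q_def by auto
    have qN: "q < N" using i q_def N_def by auto
    define k where "k = L ! q"
    have kdef: "k = pcol gN (int i + 1) - 1" using Lnth[OF qN] qi k_def by (auto simp: add.commute)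
    have Ey: "(us ! i) t < int i + 1" if "t \<le> k" for t
    proof -
      have "(us ! (q+1)) t \<le> (us ! (q+1+(N - (q+1)))) t" using UP[OF qN, of t "N - (q+1)"] that k_def qN by auto
      then have "(us ! i) t \<le> W t" using qi qN C(3) by auto
      also have "W t \<le> int i" using Wlem[of "int i + 1" t] i that kdef by auto
      finally show ?thesis by auto
    qed
    have Fix: "\<forall>t. int i + 1 \<le> (us ! q) t \<longrightarrow> (us ! i) t = (us ! q) t"
    proof -
      have "\<forall>t\<le>L ! q. (us ! Suc q) t < int i + 1" using Ey qi k_def by auto
      from star_fix[OF ST[OF qN] FP this] qN qi show ?thesis by auto
    qed
    have Ex: "(us ! q) t \<le> (us ! i) t" if "t \<le> k" for t
      using star_mono[OF ST[OF qN] FP] that qN qi k_def by auto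
    have Fx: "n < (us ! q) t" if "n < t" for t
    proof -
      have "(us ! (q + (N - q))) t \<le> (us ! q) t" using DOWN[OF that, of q "N - q"] qN by auto
      then have "W t \<le> (us ! q) t" using qN C(3) by auto
      moreover have "W t = t" using Wp(1) that unfolding perm_on_interval_def by auto
      ultimately show ?thesis using that by auto
    qed
    show "{int i + 1..n} \<subseteq> fixI {alpha_seq n gN ! (i - 1)<..n} (us ! (i - 1)) (us ! i)"
    proof
      fix v assume v: "v \<in> {int i + 1..n}"
      have "bij (us ! q)" using FP qN fp_bij by auto
      then obtain t where t: "(us ! q) t = v" by (metis bij_pointE)
      have "k < t"
      proof (rule ccontr)
        assume "\<not> k < t"
        then have "t \<le> k" by auto
        then show False using Ex[of t] Ey[of t] t v by auto
      qed
      moreover have "t \<le> n"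
      proof (rule ccontr)
        assume "\<not> t \<le> n"
        then show False using Fx[of t] t v by auto
      qed
      moreover have "(us ! i) t = v" using Fix t v by auto
      ultimately show "v \<in> fixI {alpha_seq n gN ! (i - 1)<..n} (us ! (i - 1)) (us ! i)"
        unfolding fixI_def using t k_def q_def L_def by (metis (mono_tags, lifting) greaterThanAtMost_iff mem_Collect_eq)
    qed
  qed
qed

end
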